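(* Let $t\in\mathbb C\setminus\{0,-1,-2,\dots\}$ and let $(m_{p,q})_{p,q\ge0}$ be complex numbers satisfying $$m_{p+1,q}+m_{p,q+1}-(p+q+1)m_{p,q}=m_{p,0}\,m_{0,q}\quad(p,q=0,1,2,\dots),\qquad m_{0,0}=t.$$ For a Young diagram $\lambda=(p_1,\dots,p_d\,|\,q_1,\dots,q_d)$ with $n=|\lambda|$ set $$\varphi(\lambda)=\frac{\det[m_{p_i,q_j}]_{i,j=1}^d}{t(t+1)\cdots(t+n-1)}$$ (with $\varphi(\varnothing)=1$). Then $\varphi$ is harmonic on the Young graph: $\varphi(\lambda)=\sum_{\nu:\ \nu\searrow\lambda}\varphi(\nu)$ for every Young diagram $\lambda$.
   Context: Frobenius notation: for a Young diagram $\lambda$, $d$ is the number of diagonal boxes, $p_i=\lambda_i-i$ and $q_i=\lambda'_i-i$ ($1\le i\le d$), where $\lambda'$ is the transposed diagram; $|\lambda|=\sum_i(p_i+q_i+1)$ is the number of boxes. $\nu\searrow\lambda$ means that $\nu$ is a Young diagram obtained from $\lambda$ by adding one box. *)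

theory Defs
  imports Complex_Main "Jordan_Normal_Form.Determinant"
begin

text \<open>Young diagrams as lists of row lengths (weakly decreasing, positive).\<close>
definition young :: "nat list \<Rightarrow> bool" where
  "young l \<longleftrightarrow> sorted_wrt (\<ge>) l \<and> (\<forall>x\<in>set l. 0 < x)"

text \<open>Row length lambda_i, 1-based (0 beyond the last row).\<close>
definition row :: "nat list \<Rightarrow> nat \<Rightarrow> nat" where
  "row l i = (if 1 \<le> i \<and> i \<le> length l then l ! (i - 1) else 0)"

definition col :: "nat list \<Rightarrow> nat \<Rightarrow> nat" where
  "col l j = card {i. 1 \<le> i \<and> i \<le> length l \<and> j \<le> row l i}"

definition nboxes :: "nat list \<Rightarrow> nat" where
  "nboxes l = sum_list l"

definition frob_d :: "nat list \<Rightarrow> nat" where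
  "frob_d l = card {i. 1 \<le> i \<and> i \<le> length l \<and> i \<le> row l i}"

definition frob_p :: "nat list \<Rightarrow> nat \<Rightarrow> nat" where
  "frob_p l i = row l i - i"

definition frob_q :: "nat list \<Rightarrow> nat \<Rightarrow> nat" where
  "frob_q l i = col l i - i"

definition adds_box :: "nat list \<Rightarrow> nat list \<Rightarrow> bool" where
  "adds_box l \<nu> \<longleftrightarrow> young \<nu> \<and> (\<forall>i. row l i \<le> row \<nu> i) \<and> nboxes \<nu> = nboxes l + 1"

definition phi :: "(nat \<Rightarrow> nat \<Rightarrow> complex) \<Rightarrow> complex \<Rightarrow> nat list \<Rightarrow> complex" where
  "phi m t l = det (mat (frob_d l) (frob_d l)
        (\<lambda>(i, j). m (frob_p l (i + 1)) (frob_q l (j + 1)))) / pochhammer t (nboxes l)"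

end

theory Submission
  imports Defs
begin


lemma det_row_replace:
  fixes f :: "nat \<Rightarrow> nat \<Rightarrow> 'a :: comm_ring_1"
  assumes "i < d"
  shows "det (mat d d (\<lambda>(a,b). if a = i then x b else f a b))
       = (\<Sum>b<d. x b * cofactor (mat d d (\<lambda>(a,b). f a b)) i b)"
proof -
  let ?B = "mat d d (\<lambda>(a,b). if a = i then x b else f a b)"
  let ?A = "mat d d (\<lambda>(a,b). f a b)"
  have "det ?B = (\<Sum>b<d. ?B $$ (i,b) * cofactor ?B i b)"
    by (rule laplace_expansion_row[OF _ assms]) auto
  also have "\<dots> = (\<Sum>b<d. x b * cofactor ?A i b)"
  proof (rule sum.cong[OF refl])
    fix b assume b: "b \<in> {..<d}"
    have "mat_delete ?B i b = mat_delete ?A i b"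
      by (rule eq_matI) (auto simp: mat_delete_def)
    then show "?B $$ (i,b) * cofactor ?B i b = x b * cofactor ?A i b"
      using b assms by (simp add: cofactor_def)
  qed
  finally show ?thesis .
qed

lemma det_col_replace:
  fixes f :: "nat \<Rightarrow> nat \<Rightarrow> 'a :: comm_ring_1"
  assumes "j < d"
  shows "det (mat d d (\<lambda>(a,b). if b = j then y a else f a b))
       = (\<Sum>a<d. y a * cofactor (mat d d (\<lambda>(a,b). f a b)) a j)"
proof -
  let ?B = "mat d d (\<lambda>(a,b). if b = j then y a else f a b)"
  let ?A = "mat d d (\<lambda>(a,b). f a b)"
  have "det ?B = (\<Sum>a<d. ?B $$ (a,j) * cofactor ?B a j)"
    by (rule laplace_expansion_column[OF _ assms]) auto
  also have "\<dots> = (\<Sum>a<d. y a * cofactor ?A a j)"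
  proof (rule sum.cong[OF refl])
    fix a assume a: "a \<in> {..<d}"
    have "mat_delete ?B a j = mat_delete ?A a j"
      by (rule eq_matI) (auto simp: mat_delete_def)
    then show "?B $$ (a,j) * cofactor ?B a j = y a * cofactor ?A a j"
      using a assms by (simp add: cofactor_def)
  qed
  finally show ?thesis .
qed

lemma det_bordered:
  fixes f :: "nat \<Rightarrow> nat \<Rightarrow> 'a :: comm_ring_1"
  shows "det (mat (Suc d) (Suc d) (\<lambda>(a,b). if a < d \<and> b < d then f a b else
            if a < d then u a else if b < d then v b else t))
       = t * det (mat d d (\<lambda>(a,b). f a b))
         - (\<Sum>a<d. \<Sum>b<d. u a * v b * cofactor (mat d d (\<lambda>(a,b). f a b)) a b)"
proof -
  let ?N = "mat (Suc d) (Suc d) (\<lambda>(a,b). if a < d \<and> b < d then f a b else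
            if a < d then u a else if b < d then v b else t)"
  let ?A = "mat d d (\<lambda>(a,b). f a b)"
  have "det ?N = (\<Sum>b<Suc d. ?N $$ (d,b) * cofactor ?N d b)"
    by (rule laplace_expansion_row) auto
  also have "\<dots> = (\<Sum>b<d. v b * cofactor ?N d b) + t * cofactor ?N d d"
    by simp
  also have "cofactor ?N d d = det ?A"
  proof -
    have "mat_delete ?N d d = ?A"
      by (rule eq_matI) (auto simp: mat_delete_def)
    then show ?thesis by (simp add: cofactor_def)
  qed
  also have "(\<Sum>b<d. v b * cofactor ?N d b)
       = (\<Sum>b<d. \<Sum>a<d. - (u a * v b * cofactor ?A a b))"
  proof (rule sum.cong[OF refl])
    fix b assume b: "b \<in> {..<d}"
    then have bd: "b < d" by simp
    define K where "K = mat_delete ?N d b"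
    have Kc: "K \<in> carrier_mat d d" unfolding K_def mat_delete_def by auto
    have d1: "d - 1 < d" using bd by simp
    have "det K = (\<Sum>a<d. K $$ (a, d-1) * cofactor K a (d-1))"
      by (rule laplace_expansion_column[OF Kc d1])
    also have "\<dots> = (\<Sum>a<d. u a * ((-1)^(a+(d-1)) * det (mat_delete ?A a b)))"
    proof (rule sum.cong[OF refl])
      fix a assume a: "a \<in> {..<d}"
      have "mat_delete K a (d-1) = mat_delete ?A a b"
        using bd by (intro eq_matI) (auto simp: mat_delete_def K_def)
      moreover have "K $$ (a, d-1) = u a" using a bd by (auto simp: K_def mat_delete_def)
      ultimately show "K $$ (a, d-1) * cofactor K a (d-1)
          = u a * ((-1)^(a+(d-1)) * det (mat_delete ?A a b))"
        by (simp add: cofactor_def)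
    qed
    finally have dK: "det K = \<dots>" .
    have sgn: "(-1::'a)^(d+b) * (-1)^(a+(d-1)) = - ((-1)^(a+b))" for a
    proof -
      obtain e where e: "d = Suc e" using bd by (cases d) auto
      have "(-1::'a)^(d+b) * (-1)^(a+(d-1)) = (-1)^(d+b + (a+(d-1)))"
        by (simp only: power_add)
      also have "d+b + (a+(d-1)) = Suc (2 * e + (a + b))" using e by simp
      also have "(-1::'a)^(Suc (2 * e + (a + b))) = - ((-1)^(a+b))" by (simp add: power_add power_mult)
      finally show ?thesis .
    qed
    have "v b * cofactor ?N d b = v b * ((-1)^(d+b) * det K)"
      by (simp add: cofactor_def K_def)
    also have "\<dots> = (\<Sum>a<d. v b * (u a * (((-1)^(d+b) * (-1)^(a+(d-1))) * det (mat_delete ?A a b))))"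
      unfolding dK by (simp add: sum_distrib_left mult_ac)
    also have "\<dots> = (\<Sum>a<d. - (u a * v b * cofactor ?A a b))"
      unfolding sgn by (simp add: cofactor_def mult_ac)
    finally show "v b * cofactor ?N d b = (\<Sum>a<d. - (u a * v b * cofactor ?A a b))" .
  qed
  finally have "det ?N = (\<Sum>b<d. \<Sum>a<d. - (u a * v b * cofactor ?A a b)) + t * det ?A" .
  also have "(\<Sum>b<d. \<Sum>a<d. - (u a * v b * cofactor ?A a b))
      = (\<Sum>a<d. \<Sum>b<d. - (u a * v b * cofactor ?A a b))"
    by (rule sum.swap)
  also have "\<dots> = - (\<Sum>a<d. \<Sum>b<d. u a * v b * cofactor ?A a b)"
    by (simp only: sum_negf)
  finally show ?thesis by simp
qed

definition Mt :: "(nat \<Rightarrow> nat \<Rightarrow> complex) \<Rightarrow> nat \<Rightarrow> (nat \<Rightarrow> nat) \<Rightarrow> (nat \<Rightarrow> nat) \<Rightarrow> complex mat" where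
  "Mt m k P Q = mat k k (\<lambda>(i,j). m (P (i+1)) (Q (j+1)))"

lemma sum_shift1: "(\<Sum>i\<in>{1..d}. g i) = (\<Sum>i<d. g (Suc i))"
proof -
  have "(\<Sum>i<d. g (Suc i)) = sum g (Suc ` {..<d})" by (simp add: sum.reindex)
  also have "Suc ` {..<d} = {1..d}" by (auto simp: image_iff) (metis Suc_pred' le_simps(3) lessThan_iff)
  finally show ?thesis by simp
qed

lemma main_alg:
  fixes m :: "nat \<Rightarrow> nat \<Rightarrow> complex"
  assumes rec: "\<forall>p q. m (p + 1) q + m p (q + 1) - of_nat (p + q + 1) * m p q = m p 0 * m 0 q"
    and m00: "m 0 0 = t"
    and P0: "P (Suc d) = 0" and Q0: "Q (Suc d) = 0"
  shows "(\<Sum>i\<in>{1..d}. det (Mt m d (P(i := P i + 1)) Q))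
       + (\<Sum>j\<in>{1..d}. det (Mt m d P (Q(j := Q j + 1))))
       + det (Mt m (Suc d) P Q)
       = (of_nat (\<Sum>i\<in>{1..d}. P i + Q i + 1) + t) * det (Mt m d P Q)"
proof -
  define f where "f a b = m (P (a+1)) (Q (b+1))" for a b
  define A where "A = mat d d (\<lambda>(a,b). f a b)"
  define C where "C a b = cofactor A a b" for a b
  define u where "u a = m (P (a+1)) 0" for a
  define v where "v b = m 0 (Q (b+1))" for b
  have Ac: "A \<in> carrier_mat d d" by (simp add: A_def)
  have MtA: "Mt m d P Q = A" by (simp add: Mt_def A_def f_def)
  have recI: "m (p + 1) q + m p (q + 1) = of_nat (p + q + 1) * m p q + m p 0 * m 0 q" for p q
    using rec by (metis diff_eq_eq add.commute)
  have S1: "(\<Sum>i\<in>{1..d}. det (Mt m d (P(i := P i + 1)) Q))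
      = (\<Sum>a<d. \<Sum>b<d. m (P (a+1) + 1) (Q (b+1)) * C a b)"
    unfolding sum_shift1
  proof (rule sum.cong[OF refl])
    fix i assume i: "i \<in> {..<d}"
    have "Mt m d (P(Suc i := P (Suc i) + 1)) Q
        = mat d d (\<lambda>(a,b). if a = i then m (P (i+1) + 1) (Q (b+1)) else f a b)"
      by (rule eq_matI) (auto simp: Mt_def f_def)
    then show "det (Mt m d (P(Suc i := P (Suc i) + 1)) Q) = (\<Sum>b<d. m (P (i+1) + 1) (Q (b+1)) * C i b)"
      using det_row_replace[of i d "\<lambda>b. m (P (i+1) + 1) (Q (b+1))" f] i
      by (simp add: C_def A_def)
  qed
  have S2: "(\<Sum>j\<in>{1..d}. det (Mt m d P (Q(j := Q j + 1))))
      = (\<Sum>a<d. \<Sum>b<d. m (P (a+1)) (Q (b+1) + 1) * C a b)"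
    unfolding sum_shift1
    apply (subst sum.swap)
  proof (rule sum.cong[OF refl])
    fix j assume j: "j \<in> {..<d}"
    have "Mt m d P (Q(Suc j := Q (Suc j) + 1))
        = mat d d (\<lambda>(a,b). if b = j then m (P (a+1)) (Q (j+1) + 1) else f a b)"
      by (rule eq_matI) (auto simp: Mt_def f_def)
    then show "det (Mt m d P (Q(Suc j := Q (Suc j) + 1))) = (\<Sum>a<d. m (P (a+1)) (Q (j+1) + 1) * C a j)"
      using det_col_replace[of j d "\<lambda>a. m (P (a+1)) (Q (j+1) + 1)" f] j
      by (simp add: C_def A_def)
  qed
  have S3: "det (Mt m (Suc d) P Q) = t * det A - (\<Sum>a<d. \<Sum>b<d. u a * v b * C a b)"
  proof -
    have "Mt m (Suc d) P Q = mat (Suc d) (Suc d) (\<lambda>(a,b). if a < d \<and> b < d then f a b else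
            if a < d then u a else if b < d then v b else t)"
      by (rule eq_matI) (auto simp: Mt_def f_def u_def v_def P0 Q0 m00 less_Suc_eq)
    then show ?thesis using det_bordered[of d f u v t] by (simp add: A_def C_def)
  qed
  have rowsum: "(\<Sum>b<d. f a b * C a b) = det A" if "a < d" for a
  proof -
    have "(\<Sum>b<d. f a b * C a b) = (\<Sum>j<d. A $$ (a,j) * cofactor A a j)"
      by (rule sum.cong) (auto simp: A_def C_def that)
    then show ?thesis using laplace_expansion_row[OF Ac that] by simp
  qed
  have colsum: "(\<Sum>a<d. f a b * C a b) = det A" if "b < d" for b
  proof -
    have "(\<Sum>a<d. f a b * C a b) = (\<Sum>i<d. A $$ (i,b) * cofactor A i b)"
      by (rule sum.cong) (auto simp: A_def C_def that)
    then show ?thesis using laplace_expansion_column[OF Ac that] by simp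
  qed
  have "S12": "(\<Sum>a<d. \<Sum>b<d. m (P (a+1) + 1) (Q (b+1)) * C a b)
      + (\<Sum>a<d. \<Sum>b<d. m (P (a+1)) (Q (b+1) + 1) * C a b)
      = (\<Sum>a<d. \<Sum>b<d. of_nat (P (a+1)) * (f a b * C a b))
      + (\<Sum>a<d. \<Sum>b<d. of_nat (Q (b+1)) * (f a b * C a b))
      + (\<Sum>a<d. \<Sum>b<d. f a b * C a b)
      + (\<Sum>a<d. \<Sum>b<d. u a * v b * C a b)"
    unfolding sum.distrib[symmetric] 
  proof (rule sum.cong[OF refl], rule sum.cong[OF refl])
    fix a b
    have r: "m (P (a+1) + 1) (Q (b+1)) + m (P (a+1)) (Q (b+1) + 1)
       = of_nat (P (a+1) + Q (b+1) + 1) * f a b + u a * v b"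
      unfolding f_def u_def v_def by (rule recI)
    have "m (P (a+1) + 1) (Q (b+1)) * C a b + m (P (a+1)) (Q (b+1) + 1) * C a b
      = (m (P (a+1) + 1) (Q (b+1)) + m (P (a+1)) (Q (b+1) + 1)) * C a b"
      by (simp add: algebra_simps)
    also have "\<dots> = (of_nat (P (a+1) + Q (b+1) + 1) * f a b + u a * v b) * C a b"
      by (simp only: r)
    finally show "m (P (a+1) + 1) (Q (b+1)) * C a b + m (P (a+1)) (Q (b+1) + 1) * C a b
      = of_nat (P (a+1)) * (f a b * C a b) + of_nat (Q (b+1)) * (f a b * C a b)
        + f a b * C a b + u a * v b * C a b"
      by (simp add: algebra_simps)
  qed
  have T1: "(\<Sum>a<d. \<Sum>b<d. of_nat (P (a+1)) * (f a b * C a b)) = of_nat (\<Sum>a<d. P (a+1)) * det A"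
    by (simp add: sum_distrib_left[symmetric] rowsum sum_distrib_right)
  have T2: "(\<Sum>a<d. \<Sum>b<d. of_nat (Q (b+1)) * (f a b * C a b)) = of_nat (\<Sum>b<d. Q (b+1)) * det A"
    apply (subst sum.swap)
    by (simp add: sum_distrib_left[symmetric] colsum sum_distrib_right)
  have T3: "(\<Sum>a<d. \<Sum>b<d. f a b * C a b) = of_nat d * det A"
    by (simp add: rowsum)
  have N: "(\<Sum>i\<in>{1..d}. P i + Q i + 1) = (\<Sum>a<d. P (a+1)) + (\<Sum>b<d. Q (b+1)) + d"
    unfolding sum_shift1 sum.distrib by simp
  show ?thesis
    unfolding S1 S2 S3 S12 T1 T2 T3 N MtA
    by (simp add: algebra_simps)
qed



lemma row_pos: "0 < row l i \<Longrightarrow> 1 \<le> i \<and> i \<le> length l"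
  by (auto simp: row_def split: if_splits)

lemma row_out: "i = 0 \<or> length l < i \<Longrightarrow> row l i = 0"
  by (auto simp: row_def)

lemma young_iff: "young l \<longleftrightarrow>
   (\<forall>i j. 1 \<le> i \<longrightarrow> i \<le> j \<longrightarrow> j \<le> length l \<longrightarrow> row l j \<le> row l i) \<and>
   (\<forall>i. 1 \<le> i \<longrightarrow> i \<le> length l \<longrightarrow> 0 < row l i)"
proof
  assume y: "young l"
  then have s: "sorted_wrt (\<ge>) l" and p: "\<forall>x\<in>set l. 0 < x" by (auto simp: young_def)
  show "(\<forall>i j. 1 \<le> i \<longrightarrow> i \<le> j \<longrightarrow> j \<le> length l \<longrightarrow> row l j \<le> row l i) \<and>
   (\<forall>i. 1 \<le> i \<longrightarrow> i \<le> length l \<longrightarrow> 0 < row l i)"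
  proof (intro conjI allI impI)
    fix i j assume "1 \<le> i" "i \<le> j" "j \<le> length l"
    then show "row l j \<le> row l i"
      using s by (cases "i = j") (auto simp: row_def sorted_wrt_iff_nth_less)
  next
    fix i assume "1 \<le> i" "i \<le> length l"
    then show "0 < row l i" using p by (auto simp: row_def)
  qed
next
  assume h: "(\<forall>i j. 1 \<le> i \<longrightarrow> i \<le> j \<longrightarrow> j \<le> length l \<longrightarrow> row l j \<le> row l i) \<and>
   (\<forall>i. 1 \<le> i \<longrightarrow> i \<le> length l \<longrightarrow> 0 < row l i)"
  have "sorted_wrt (\<ge>) l"
    unfolding sorted_wrt_iff_nth_less
  proof (intro allI impI)
    fix a b assume "a < b" "b < length l"
    then have "row l (b+1) \<le> row l (a+1)" using h by auto
    then show "l ! b \<le> l ! a" using \<open>a < b\<close> \<open>b < length l\<close> by (simp add: row_def)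
  qed
  moreover have "\<forall>x\<in>set l. 0 < x"
  proof
    fix x assume "x \<in> set l"
    then obtain a where "a < length l" "l ! a = x" by (auto simp: in_set_conv_nth)
    then show "0 < x" using h[THEN conjunct2, rule_format, of "a+1"] by (simp add: row_def)
  qed
  ultimately show "young l" by (simp add: young_def)
qed

lemma young_anti: "young l \<Longrightarrow> 1 \<le> i \<Longrightarrow> i \<le> j \<Longrightarrow> row l j \<le> row l i"
  by (cases "j \<le> length l") (auto simp: young_iff row_out)

lemma young_pos: "young l \<Longrightarrow> 1 \<le> i \<Longrightarrow> i \<le> length l \<Longrightarrow> 0 < row l i"
  by (auto simp: young_iff)

lemma young_row_inj:
  assumes "young a" "young b" "\<And>i. row a i = row b i"
  shows "a = b"
proof -
  have len: "length a = length b"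
  proof (rule ccontr)
    assume "length a \<noteq> length b"
    then consider "length a < length b" | "length b < length a" by linarith
    then show False
    proof cases
      case 1
      then have "0 < row b (length a + 1)" using young_pos[OF assms(2)] by simp
      moreover have "row a (length a + 1) = 0" by (simp add: row_out)
      ultimately show False using assms(3) by simp
    next
      case 2
      then have "0 < row a (length b + 1)" using young_pos[OF assms(1)] by simp
      moreover have "row b (length b + 1) = 0" by (simp add: row_out)
      ultimately show False using assms(3) by simp
    qed
  qed
  show ?thesis
  proof (rule nth_equalityI[OF len])
    fix k assume "k < length a"
    then show "a ! k = b ! k" using assms(3)[of "k+1"] len by (simp add: row_def)
  qed
qed

lemma downclosed_interval:
  assumes "finite S" "\<forall>i\<in>S. 1 \<le> i \<and> {1..i} \<subseteq> S"
  shows "S = {1..card S}"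
proof -
  have sub: "S \<subseteq> {1..card S}"
  proof
    fix i assume "i \<in> S"
    then have "{1..i} \<subseteq> S" "1 \<le> i" using assms(2) by auto
    then have "card {1..i} \<le> card S" using assms(1) by (intro card_mono)
    then show "i \<in> {1..card S}" using \<open>1 \<le> i\<close> by simp
  qed
  show ?thesis by (rule card_subset_eq[OF _ sub]) auto
qed

lemma nat_le_ext: "(\<And>i. 1 \<le> i \<Longrightarrow> (i \<le> x \<longleftrightarrow> i \<le> (y::nat))) \<Longrightarrow> x = y"
proof (rule antisym)
  assume h: "\<And>i. 1 \<le> i \<Longrightarrow> (i \<le> x \<longleftrightarrow> i \<le> y)"
  show "x \<le> y" using h[of x] by (cases "x = 0") auto
  show "y \<le> x" using h[of y] by (cases "y = 0") auto
qed

lemma frob_d_char: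
  assumes y: "young l" and i: "1 \<le> i"
  shows "i \<le> frob_d l \<longleftrightarrow> i \<le> row l i"
proof -
  let ?S = "{i. 1 \<le> i \<and> i \<le> length l \<and> i \<le> row l i}"
  have "?S = {1..card ?S}"
  proof (rule downclosed_interval)
    show "finite ?S" by (rule finite_subset[of _ "{..length l}"]) auto
    show "\<forall>i\<in>?S. 1 \<le> i \<and> {1..i} \<subseteq> ?S"
    proof (intro ballI conjI subsetI)
      fix i k assume "i \<in> ?S" "k \<in> {1..i}"
      then show "k \<in> ?S" using young_anti[OF y, of k i] by auto
    qed auto
  qed
  then have "i \<in> ?S \<longleftrightarrow> i \<in> {1..card ?S}" by (rule arg_cong[where f = "\<lambda>A. i \<in> A"])
  then have "i \<in> ?S \<longleftrightarrow> i \<le> frob_d l" using i unfolding frob_d_def by simp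
  moreover have "i \<in> ?S \<longleftrightarrow> i \<le> row l i" using i row_pos[of l i] by auto
  ultimately show ?thesis by simp
qed

lemma col_char:
  assumes y: "young l" and i: "1 \<le> i" and j: "1 \<le> j"
  shows "i \<le> col l j \<longleftrightarrow> j \<le> row l i"
proof -
  let ?S = "{i. 1 \<le> i \<and> i \<le> length l \<and> j \<le> row l i}"
  have "?S = {1..card ?S}"
  proof (rule downclosed_interval)
    show "finite ?S" by (rule finite_subset[of _ "{..length l}"]) auto
    show "\<forall>i\<in>?S. 1 \<le> i \<and> {1..i} \<subseteq> ?S"
    proof (intro ballI conjI subsetI)
      fix i k assume "i \<in> ?S" "k \<in> {1..i}"
      then show "k \<in> ?S" using young_anti[OF y, of k i] by auto
    qed auto
  qed
  then have "i \<in> ?S \<longleftrightarrow> i \<in> {1..card ?S}" by (rule arg_cong[where f = "\<lambda>A. i \<in> A"])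
  then have "i \<in> ?S \<longleftrightarrow> i \<le> col l j" using i unfolding col_def by simp
  moreover have "i \<in> ?S \<longleftrightarrow> j \<le> row l i" using i j row_pos[of l i] by auto
  ultimately show ?thesis by simp
qed



definition addR :: "nat list \<Rightarrow> nat set" where
  "addR l = {r. 1 \<le> r \<and> r \<le> length l + 1 \<and> (r = 1 \<or> row l r < row l (r - 1))}"

definition add_row :: "nat list \<Rightarrow> nat \<Rightarrow> nat list" where
  "add_row l r = (if r \<le> length l then l[r-1 := l!(r-1) + 1] else l @ [1])"

lemma finite_addR: "finite (addR l)"
  by (rule finite_subset[of _ "{..length l + 1}"]) (auto simp: addR_def)

lemma row_add_row:
  assumes "1 \<le> r" "r \<le> length l + 1"
  shows "row (add_row l r) i = (if i = r then row l r + 1 else row l i)"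
proof (cases "r \<le> length l")
  case True
  then show ?thesis using assms
    by (auto simp: add_row_def row_def nth_list_update)
next
  case False
  then have r: "r = length l + 1" using assms by simp
  then show ?thesis
    by (auto simp: add_row_def row_def nth_append)
qed

lemma length_add_row: "length (add_row l r) = (if r \<le> length l then length l else length l + 1)"
  by (simp add: add_row_def)

lemma young_add_row:
  assumes y: "young l" and r: "r \<in> addR l"
  shows "young (add_row l r)"
proof -
  have r1: "1 \<le> r" and r2: "r \<le> length l + 1" and r3: "r = 1 \<or> row l r < row l (r - 1)"
    using r by (auto simp: addR_def)
  note rr = row_add_row[OF r1 r2]
  show ?thesis unfolding young_iff
  proof (intro conjI allI impI)
    fix i j assume ij: "1 \<le> i" "i \<le> j" "j \<le> length (add_row l r)"
    show "row (add_row l r) j \<le> row (add_row l r) i"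
    proof (cases "j = r")
      case False
      then show ?thesis using young_anti[OF y ij(1,2)] unfolding rr by auto
    next
      case True
      show ?thesis
      proof (cases "i = j")
        case False
        then have "i \<le> r - 1" "r \<noteq> 1" using ij True by auto
        then have "row l (r - 1) \<le> row l i" using young_anti[OF y ij(1)] by auto
        then show ?thesis unfolding rr using True False r3 \<open>r \<noteq> 1\<close> by auto
      qed simp
    qed
  next
    fix i assume i: "1 \<le> i" "i \<le> length (add_row l r)"
    show "0 < row (add_row l r) i"
    proof (cases "i = r")
      case False
      then have "i \<le> length l" using i r2 by (auto simp: length_add_row split: if_splits)
      then show ?thesis unfolding rr using False young_pos[OF y i(1)] by simp
    qed (simp add: rr)
  qed
qed

lemma nboxes_row_sum:
  assumes "length l \<le> N"
  shows "nboxes l = (\<Sum>i\<in>{1..N}. row l i)"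
proof -
  have "(\<Sum>i\<in>{1..N}. row l i) = (\<Sum>k<N. row l (Suc k))" by (rule sum_shift1)
  also have "\<dots> = (\<Sum>k<length l. row l (Suc k))"
    by (rule sum.mono_neutral_right) (use assms in \<open>auto simp: row_def\<close>)
  also have "\<dots> = (\<Sum>k<length l. l ! k)"
    by (rule sum.cong) (auto simp: row_def)
  also have "\<dots> = sum_list l" by (simp add: sum_list_sum_nth atLeast0LessThan)
  finally show ?thesis by (simp add: nboxes_def)
qed

lemma sum_bump:
  assumes "finite A" "r \<in> A"
  shows "(\<Sum>i\<in>A. if i = r then g r + 1 else g i) = (\<Sum>i\<in>A. g i) + (1::nat)"
proof -
  have "(\<Sum>i\<in>A. if i = r then g r + 1 else g i) = (\<Sum>i\<in>A. g i + (if i = r then 1 else 0))"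
    by (rule sum.cong) auto
  also have "\<dots> = (\<Sum>i\<in>A. g i) + 1" using assms by (simp add: sum.distrib)
  finally show ?thesis .
qed

lemma adds_box_add_row:
  assumes y: "young l" and r: "r \<in> addR l"
  shows "adds_box l (add_row l r)"
proof -
  have r1: "1 \<le> r" and r2: "r \<le> length l + 1"
    using r by (auto simp: addR_def)
  note rr = row_add_row[OF r1 r2]
  have "nboxes (add_row l r) = (\<Sum>i\<in>{1..length l + 1}. row (add_row l r) i)"
    by (rule nboxes_row_sum) (simp add: length_add_row)
  also have "\<dots> = (\<Sum>i\<in>{1..length l + 1}. row l i) + 1"
    unfolding rr by (rule sum_bump) (use r1 r2 in auto)
  also have "(\<Sum>i\<in>{1..length l + 1}. row l i) = nboxes l"
    by (rule nboxes_row_sum[symmetric]) simp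
  finally show ?thesis unfolding adds_box_def using young_add_row[OF y r] rr by auto
qed

lemma sum_eq_one:
  assumes "finite A" "(\<Sum>i\<in>A. g i) = (1::nat)"
  shows "\<exists>r\<in>A. g r = 1 \<and> (\<forall>i\<in>A. i \<noteq> r \<longrightarrow> g i = 0)"
proof -
  obtain r where r: "r \<in> A" "g r \<noteq> 0" using assms(2) by (metis sum.neutral zero_neq_one)
  have "(\<Sum>i\<in>A. g i) = g r + (\<Sum>i\<in>A - {r}. g i)" using assms(1) r(1) by (simp add: sum.remove)
  then have "g r = 1" "(\<Sum>i\<in>A - {r}. g i) = 0" using assms(2) r(2) by auto
  then show ?thesis using r(1) assms(1) by auto
qed

lemma adds_box_surj:
  assumes y: "young l" and a: "adds_box l \<nu>"
  shows "\<exists>r\<in>addR l. \<nu> = add_row l r"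
proof -
  have yn: "young \<nu>" and le: "\<And>i. row l i \<le> row \<nu> i" and nb: "nboxes \<nu> = nboxes l + 1"
    using a by (auto simp: adds_box_def)
  define N where "N = length l + length \<nu>"
  have "(\<Sum>i\<in>{1..N}. row \<nu> i) = (\<Sum>i\<in>{1..N}. row l i) + 1"
    using nb nboxes_row_sum[of l N] nboxes_row_sum[of \<nu> N] by (simp add: N_def)
  then have "(\<Sum>i\<in>{1..N}. row \<nu> i - row l i) = 1"
    using le by (simp add: sum_subtractf_nat)
  then obtain r where r: "r \<in> {1..N}" "row \<nu> r - row l r = 1"
    and o: "\<forall>i\<in>{1..N}. i \<noteq> r \<longrightarrow> row \<nu> i - row l i = 0"
    using sum_eq_one[of "{1..N}"] by blast
  have rowv: "row \<nu> i = (if i = r then row l r + 1 else row l i)" for i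
  proof (cases "i \<in> {1..N}")
    case True then show ?thesis using r o le[of i] le[of r] by force
  next
    case False
    then have "i = 0 \<or> N < i" by auto
    then have "row \<nu> i = 0" "row l i = 0" by (auto simp: row_out N_def)
    then show ?thesis using False r(1) by auto
  qed
  have r1: "1 \<le> r" using r by auto
  have r3: "r = 1 \<or> row l r < row l (r - 1)"
  proof (cases "r = 1")
    case False
    then have "row \<nu> r \<le> row \<nu> (r - 1)" using young_anti[OF yn, of "r-1" r] r1 by simp
    then show ?thesis using rowv[of r] rowv[of "r-1"] r1 False by (auto split: if_splits)
  qed simp
  have r2: "r \<le> length l + 1"
  proof (rule ccontr)
    assume "\<not> ?thesis"
    then have "row l (r - 1) = 0" "r \<noteq> 1" by (auto simp: row_out)
    then show False using r3 by simp
  qed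
  have rA: "r \<in> addR l" using r1 r2 r3 by (simp add: addR_def)
  have "\<nu> = add_row l r"
    by (rule young_row_inj[OF yn young_add_row[OF y rA]]) (simp add: rowv row_add_row[OF r1 r2])
  then show ?thesis using rA by blast
qed

lemma adds_box_set:
  assumes y: "young l"
  shows "{\<nu>. adds_box l \<nu>} = add_row l ` addR l" "inj_on (add_row l) (addR l)"
proof -
  show "{\<nu>. adds_box l \<nu>} = add_row l ` addR l"
    using adds_box_surj[OF y] adds_box_add_row[OF y] by blast
  show "inj_on (add_row l) (addR l)"
  proof
    fix r s assume r: "r \<in> addR l" and s: "s \<in> addR l" and e: "add_row l r = add_row l s"
    have "row (add_row l r) r = row (add_row l s) r" using e by simp
    then show "r = s" using r s by (auto simp: addR_def row_add_row split: if_splits)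
  qed
qed



lemma Mt_cong:
  assumes "\<And>i. 1 \<le> i \<Longrightarrow> i \<le> k \<Longrightarrow> P i = P' i" "\<And>i. 1 \<le> i \<Longrightarrow> i \<le> k \<Longrightarrow> Q i = Q' i"
  shows "Mt m k P Q = Mt m k P' Q'"
  by (rule eq_matI) (auto simp: Mt_def assms)

definition "Sf k = (\<Sum>i\<in>{1..frob_d k}. frob_p k i + frob_q k i + 1)"

lemma p_last: "young l \<Longrightarrow> frob_p l (frob_d l + 1) = 0"
  using frob_d_char[of l "frob_d l + 1"] by (simp add: frob_p_def)

lemma q_last: assumes y: "young l" shows "frob_q l (frob_d l + 1) = 0"
proof -
  have "\<not> (frob_d l + 1 \<le> col l (frob_d l + 1))"
    using frob_d_char[OF y, of "frob_d l + 1"] col_char[OF y, of "frob_d l + 1" "frob_d l + 1"] by simp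
  then show ?thesis by (simp add: frob_q_def)
qed


context
  fixes l r
  assumes y: "young l" and rA: "r \<in> addR l"
begin

lemma r1: "1 \<le> r" and r2: "r \<le> length l + 1" and r3: "r = 1 \<or> row l r < row l (r - 1)"
  using rA by (auto simp: addR_def)

lemma rowN: "row (add_row l r) i = (if i = r then row l r + 1 else row l i)"
  by (rule row_add_row[OF r1 r2])

lemma yN: "young (add_row l r)" by (rule young_add_row[OF y rA])

lemma col_c: "col l (row l r + 1) = r - 1"
proof (rule nat_le_ext)
  fix i :: nat assume i: "1 \<le> i"
  have "i \<le> col l (row l r + 1) \<longleftrightarrow> row l r + 1 \<le> row l i" by (rule col_char[OF y i]) simp
  also have "\<dots> \<longleftrightarrow> i \<le> r - 1"
  proof
    assume h: "row l r + 1 \<le> row l i"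
    show "i \<le> r - 1"
    proof (rule ccontr)
      assume "\<not> i \<le> r - 1"
      then have "r \<le> i" by simp
      then have "row l i \<le> row l r" using young_anti[OF y r1] by simp
      then show False using h by simp
    qed
  next
    assume h: "i \<le> r - 1"
    then have "r \<noteq> 1" using i by auto
    then have "row l r < row l (r - 1)" using r3 by simp
    moreover have "row l (r - 1) \<le> row l i" using young_anti[OF y i h] .
    ultimately show "row l r + 1 \<le> row l i" by simp
  qed
  finally show "i \<le> col l (row l r + 1) \<longleftrightarrow> i \<le> r - 1" .
qed

lemma colN: "1 \<le> j \<Longrightarrow> col (add_row l r) j = (if j = row l r + 1 then r else col l j)"
proof (cases "j = row l r + 1")
  case True
  assume j: "1 \<le> j"
  have "col (add_row l r) (row l r + 1) = r"
  proof (rule nat_le_ext)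
    fix i :: nat assume i: "1 \<le> i"
    have "i \<le> col (add_row l r) (row l r + 1) \<longleftrightarrow> row l r + 1 \<le> row (add_row l r) i"
      by (rule col_char[OF yN i]) simp
    also have "\<dots> \<longleftrightarrow> i = r \<or> row l r + 1 \<le> row l i" unfolding rowN by auto
    also have "\<dots> \<longleftrightarrow> i = r \<or> i \<le> col l (row l r + 1)" using col_char[OF y i, of "row l r + 1"] by simp
    also have "\<dots> \<longleftrightarrow> i \<le> r" unfolding col_c using r1 by auto
    finally show "i \<le> col (add_row l r) (row l r + 1) \<longleftrightarrow> i \<le> r" .
  qed
  then show ?thesis using True by simp
next
  case False
  assume j: "1 \<le> j"
  have "col (add_row l r) j = col l j"
  proof (rule nat_le_ext)
    fix i :: nat assume i: "1 \<le> i"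
    have "i \<le> col (add_row l r) j \<longleftrightarrow> j \<le> row (add_row l r) i"
      by (rule col_char[OF yN i j])
    also have "\<dots> \<longleftrightarrow> j \<le> row l i" unfolding rowN using False by auto
    also have "\<dots> \<longleftrightarrow> i \<le> col l j" using col_char[OF y i j] by simp
    finally show "i \<le> col (add_row l r) j \<longleftrightarrow> i \<le> col l j" .
  qed
  then show ?thesis using False by simp
qed

lemma dN_A: "r \<le> frob_d l \<Longrightarrow> frob_d (add_row l r) = frob_d l"
proof (rule nat_le_ext)
  fix i :: nat assume rd: "r \<le> frob_d l" and i: "1 \<le> i"
  have rr: "r \<le> row l r" using frob_d_char[OF y r1] rd by simp
  show "i \<le> frob_d (add_row l r) \<longleftrightarrow> i \<le> frob_d l"
    unfolding frob_d_char[OF yN i] frob_d_char[OF y i] rowN using rr by auto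
qed

lemma dN_B: "frob_d l < r \<Longrightarrow> row l r + 1 \<le> frob_d l \<Longrightarrow> frob_d (add_row l r) = frob_d l"
proof (rule nat_le_ext)
  fix i :: nat assume rd: "frob_d l < r" "row l r + 1 \<le> frob_d l" and i: "1 \<le> i"
  show "i \<le> frob_d (add_row l r) \<longleftrightarrow> i \<le> frob_d l"
    unfolding frob_d_char[OF yN i] frob_d_char[OF y i] rowN using rd by auto
qed

lemma dN_C: "r = frob_d l + 1 \<Longrightarrow> row l r = frob_d l \<Longrightarrow> frob_d (add_row l r) = frob_d l + 1"
proof (rule nat_le_ext)
  fix i :: nat assume rd: "r = frob_d l + 1" "row l r = frob_d l" and i: "1 \<le> i"
  show "i \<le> frob_d (add_row l r) \<longleftrightarrow> i \<le> frob_d l + 1"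
    unfolding frob_d_char[OF yN i] rowN
  proof (cases "i = r")
    case False
    then show "(i \<le> (if i = r then row l r + 1 else row l i)) = (i \<le> frob_d l + 1)"
      using frob_d_char[OF y i] rd by auto
  qed (use rd in simp)
qed

lemma case_imp: "frob_d l < r \<Longrightarrow> frob_d l < row l r + 1 \<Longrightarrow> r = frob_d l + 1 \<and> row l r = frob_d l"
proof -
  let ?d = "frob_d l"
  assume a: "?d < r" "?d < row l r + 1"
  have d1: "\<not> (?d + 1 \<le> row l (?d + 1))" using frob_d_char[OF y, of "?d+1"] by simp
  have "row l r \<le> row l (?d + 1)" using young_anti[OF y, of "?d+1" r] a by simp
  then have rr: "row l r = ?d" using a d1 by simp
  show ?thesis
  proof (rule ccontr)
    assume "\<not> (r = ?d + 1 \<and> row l r = ?d)"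
    then have "?d + 1 < r" using rr a by simp
    then have "row l (r - 1) \<le> row l (?d + 1)" using young_anti[OF y, of "?d+1" "r-1"] by simp
    moreover have "row l r < row l (r - 1)" using r3 \<open>?d + 1 < r\<close> by simp
    ultimately show False using rr d1 by simp
  qed
qed

lemma det_add_row:
  "det (Mt m (frob_d (add_row l r)) (frob_p (add_row l r)) (frob_q (add_row l r))) =
    (if r \<le> frob_d l then det (Mt m (frob_d l) ((frob_p l)(r := frob_p l r + 1)) (frob_q l))
     else if row l r + 1 \<le> frob_d l then
       det (Mt m (frob_d l) (frob_p l) ((frob_q l)(row l r + 1 := frob_q l (row l r + 1) + 1)))
     else det (Mt m (frob_d l + 1) (frob_p l) (frob_q l)))
   \<and> Sf (add_row l r) = Sf l + 1"
proof -
  let ?d = "frob_d l" and ?p = "frob_p l" and ?q = "frob_q l" and ?N = "add_row l r"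
  let ?c = "row l r + 1"
  have pN: "frob_p ?N i = (if i = r then row l r + 1 - r else frob_p l i)" for i
    by (simp add: frob_p_def rowN)
  have qN: "1 \<le> j \<Longrightarrow> frob_q ?N j = (if j = ?c then r - ?c else frob_q l j)" for j
    by (simp add: frob_q_def colN)
  have qc: "?q ?c = (r - 1) - ?c" by (simp only: frob_q_def col_c)
  show ?thesis
  proof (cases "r \<le> ?d")
    case A: True
    have rr: "r \<le> row l r" using frob_d_char[OF y r1] A by simp
    have P: "frob_p ?N i = (?p(r := ?p r + 1)) i" for i
      using rr unfolding pN by (simp add: frob_p_def Suc_diff_le)
    have Q: "1 \<le> j \<Longrightarrow> frob_q ?N j = ?q j" for j
      using rr qc by (simp add: qN)
    have "Mt m (frob_d ?N) (frob_p ?N) (frob_q ?N) = Mt m ?d (?p(r := ?p r + 1)) ?q"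
      unfolding dN_A[OF A] by (rule Mt_cong) (auto simp: P Q)
    moreover have "Sf ?N = Sf l + 1"
    proof -
      have "Sf ?N = (\<Sum>i\<in>{1..?d}. if i = r then (?p r + ?q r + 1) + 1 else ?p i + ?q i + 1)"
        unfolding Sf_def dN_A[OF A] by (rule sum.cong) (auto simp: P Q)
      also have "\<dots> = Sf l + 1" unfolding Sf_def by (rule sum_bump) (use A r1 in auto)
      finally show ?thesis .
    qed
    ultimately show ?thesis using A by simp
  next
    case nA: False
    show ?thesis
    proof (cases "?c \<le> ?d")
      case B: True
      have dB: "frob_d ?N = ?d" using dN_B nA B by simp
      have P: "frob_p ?N i = ?p i" for i
        using nA B unfolding pN by (simp add: frob_p_def)
      have Q: "1 \<le> j \<Longrightarrow> frob_q ?N j = (?q(?c := ?q ?c + 1)) j" for j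
        using nA B qc by (simp add: qN; arith)
      have "Mt m (frob_d ?N) (frob_p ?N) (frob_q ?N) = Mt m ?d ?p (?q(?c := ?q ?c + 1))"
        unfolding dB by (rule Mt_cong) (auto simp: P Q)
      moreover have "Sf ?N = Sf l + 1"
      proof -
        have "Sf ?N = (\<Sum>i\<in>{1..?d}. if i = ?c then (?p ?c + ?q ?c + 1) + 1 else ?p i + ?q i + 1)"
          unfolding Sf_def dB by (rule sum.cong) (auto simp: P Q)
        also have "\<dots> = Sf l + 1" unfolding Sf_def by (rule sum_bump) (use B in auto)
        finally show ?thesis .
      qed
      ultimately show ?thesis using nA B by simp
    next
      case nB: False
      have C: "r = ?d + 1" "row l r = ?d" using case_imp nA nB by auto
      have dC: "frob_d ?N = ?d + 1" using dN_C C by simp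
      have P: "i \<le> ?d + 1 \<Longrightarrow> frob_p ?N i = ?p i" for i
        unfolding pN using C p_last[OF y] by simp
      have Q: "frob_q ?N j = ?q j" if "1 \<le> j" "j \<le> ?d + 1" for j
        unfolding qN[OF that(1)] using C q_last[OF y] qc by simp
      have "Mt m (frob_d ?N) (frob_p ?N) (frob_q ?N) = Mt m (?d + 1) ?p ?q"
        unfolding dC by (rule Mt_cong) (auto simp: P Q)
      moreover have "Sf ?N = Sf l + 1"
      proof -
        have "Sf ?N = (\<Sum>i\<in>{1..?d+1}. ?p i + ?q i + 1)"
          unfolding Sf_def dC by (rule sum.cong) (auto simp: P Q)
        also have "\<dots> = Sf l + 1" unfolding Sf_def using p_last[OF y] q_last[OF y] by simp
        finally show ?thesis .
      qed
      ultimately show ?thesis using nA nB by simp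
    qed
  qed
qed

end



lemma row_butlast: "row (butlast l) i = (if i = length l then 0 else row l i)"
proof (cases "1 \<le> i \<and> i < length l")
  case True
  then have "i - 1 < length (butlast l)" by (simp only: length_butlast) linarith
  then have "butlast l ! (i - 1) = l ! (i - 1)" by (rule nth_butlast)
  moreover have "i \<le> length l - 1" using True by linarith
  ultimately show ?thesis using True by (simp add: row_def)
next
  case False
  then have "i = 0 \<or> length (butlast l) < i" by (simp only: length_butlast) linarith
  then have "row (butlast l) i = 0" by (rule row_out)
  moreover have "i \<noteq> length l \<Longrightarrow> row l i = 0"
  proof -
    assume "i \<noteq> length l"
    then have "i = 0 \<or> length l < i" using False by linarith
    then show ?thesis by (rule row_out)
  qed
  ultimately show ?thesis by simp
qed

lemma row_upd_last:
  assumes ne: "l \<noteq> []"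
  shows "row (l[length l - 1 := x]) i = (if i = length l then x else row l i)"
proof (cases "1 \<le> i \<and> i \<le> length l")
  case True
  have "l[length l - 1 := x] ! (i - 1) = (if length l - 1 = i - 1 then x else l ! (i - 1))"
    using ne by (intro nth_list_update) simp
  moreover have "(length l - 1 = i - 1) = (i = length l)" using True by auto
  ultimately show ?thesis using True by (simp add: row_def)
next
  case False
  have "length l > 0" using ne by simp
  then have "i \<noteq> length l" "i = 0 \<or> length l < i" using False by linarith+
  then show ?thesis using row_out[of i "l[length l - 1 := x]"] row_out[of i l] by simp
qed

lemma remove_box:
  assumes y: "young l" and ne: "l \<noteq> []"
  shows "\<exists>l' r. young l' \<and> r \<in> addR l' \<and> l = add_row l' r"
proof -
  define k where "k = length l"
  define L where "L = row l k"
  have k1: "1 \<le> k" using ne by (cases l) (auto simp: k_def)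
  have L0: "0 < L" using young_pos[OF y k1] by (simp add: L_def k_def)
  have prev: "k \<noteq> 1 \<Longrightarrow> L \<le> row l (k - 1)" using young_anti[OF y, of "k-1" k] k1 by (simp add: L_def)
  have prevpos: "k \<noteq> 1 \<Longrightarrow> 0 < row l (k - 1)" using young_pos[OF y, of "k-1"] k1 by (simp add: k_def)
  define l' where "l' = (if L = 1 then butlast l else l[k - 1 := L - 1])"
  have len': "length l' = (if L = 1 then k - 1 else k)" by (simp add: l'_def k_def)
  have row': "row l' i = (if i = k then L - 1 else row l i)" for i
  proof (cases "L = 1")
    case True
    then show ?thesis by (simp add: l'_def row_butlast k_def)
  next
    case False
    then have "l' = l[length l - 1 := L - 1]" by (simp add: l'_def k_def)
    then have "row l' i = (if i = length l then L - 1 else row l i)"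
      by (simp only: row_upd_last[OF ne])
    then show ?thesis by (simp add: k_def)
  qed
  have y': "young l'" unfolding young_iff
  proof (intro conjI allI impI)
    fix i j assume ij: "1 \<le> i" "i \<le> j" "j \<le> length l'"
    then have "j \<le> k" using len' by (simp split: if_splits)
    show "row l' j \<le> row l' i"
      using young_anti[OF y ij(1,2)] ij \<open>j \<le> k\<close> unfolding row' by (auto simp: L_def)
  next
    fix i assume i: "1 \<le> i" "i \<le> length l'"
    show "0 < row l' i"
    proof (cases "i = k")
      case True then show ?thesis using i len' L0 by (auto simp: row' split: if_splits)
    next
      case False then show ?thesis using i len' young_pos[OF y i(1)] by (auto simp: row' k_def split: if_splits)
    qed
  qed
  have kA1: "k \<le> length l' + 1" using len' k1 by (cases "L = 1") auto
  have kA2: "k = 1 \<or> row l' k < row l' (k - 1)"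
  proof (cases "k = 1")
    case False
    then have "k - 1 \<noteq> k" using k1 by simp
    then have "row l' (k - 1) = row l (k - 1)" "row l' k = L - 1" by (simp_all add: row')
    then have "row l' k < row l' (k - 1)" using prev[OF False] L0 by linarith
    then show ?thesis by simp
  qed simp
  have kA: "k \<in> addR l'"
    unfolding addR_def using k1 kA1 kA2 by simp
  have "l = add_row l' k"
  proof (rule young_row_inj[OF y young_add_row[OF y' kA]])
    fix i
    have "1 \<le> k" "k \<le> length l' + 1" using kA by (auto simp: addR_def)
    then show "row l i = row (add_row l' k) i"
      unfolding row_add_row[OF \<open>1 \<le> k\<close> \<open>k \<le> length l' + 1\<close>] row' using L0 by (simp add: L_def)
  qed
  then show ?thesis using y' kA by blast
qed

lemma nboxes_Sf: "young l \<Longrightarrow> nboxes l = Sf l"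
proof (induction "nboxes l" arbitrary: l rule: less_induct)
  case less
  show ?case
  proof (cases "l = []")
    case True
    have "{i. 1 \<le> i \<and> i \<le> length l \<and> i \<le> row l i} = {}" using True by auto
    then have "frob_d l = 0" by (simp add: frob_d_def)
    then show ?thesis using True by (simp add: nboxes_def Sf_def)
  next
    case False
    obtain l' r where l': "young l'" "r \<in> addR l'" "l = add_row l' r"
      using remove_box[OF less.prems False] by blast
    have nb: "nboxes l = nboxes l' + 1" using adds_box_add_row[OF l'(1,2)] l'(3) by (simp add: adds_box_def)
    have "Sf l = Sf l' + 1" using det_add_row[OF l'(1,2)] l'(3) by simp
    moreover have "nboxes l' = Sf l'" using less.hyps[of l'] nb l'(1) by simp
    ultimately show ?thesis using nb by simp
  qed
qed

lemma Mt_zero_row: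
  assumes "1 \<le> a" "a < b" "b \<le> k" "P a = P b"
  shows "det (Mt m k P Q) = 0"
proof (rule det_identical_rows[of _ k "a - 1" "b - 1"])
  show "Mt m k P Q \<in> carrier_mat k k" by (simp add: Mt_def)
  show "Matrix.row (Mt m k P Q) (a - 1) = Matrix.row (Mt m k P Q) (b - 1)"
    by (rule eq_vecI) (use assms in \<open>auto simp: Mt_def Matrix.row_def\<close>)
qed (use assms in auto)

lemma Mt_zero_col:
  assumes "1 \<le> a" "a < b" "b \<le> k" "Q a = Q b"
  shows "det (Mt m k P Q) = 0"
proof (rule det_identical_columns[of _ k "a - 1" "b - 1"])
  show "Mt m k P Q \<in> carrier_mat k k" by (simp add: Mt_def)
  show "Matrix.col (Mt m k P Q) (a - 1) = Matrix.col (Mt m k P Q) (b - 1)"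
    by (rule eq_vecI) (use assms in \<open>auto simp: Mt_def Matrix.col_def\<close>)
qed (use assms in auto)



lemma d_le_len: "young l \<Longrightarrow> frob_d l \<le> length l"
proof (cases "frob_d l = 0")
  case False
  assume y: "young l"
  then have "frob_d l \<le> row l (frob_d l)" using frob_d_char[OF y, of "frob_d l"] False by simp
  then have "0 < row l (frob_d l)" using False by linarith
  then show ?thesis using row_pos by blast
qed simp

lemma zeroA:
  assumes y: "young l" and i: "i \<in> {1..frob_d l}" and ni: "i \<notin> addR l"
  shows "det (Mt m (frob_d l) ((frob_p l)(i := frob_p l i + 1)) (frob_q l)) = 0"
proof -
  let ?d = "frob_d l"
  have i1: "1 \<le> i" and id: "i \<le> ?d" using i by auto
  have ir: "i \<le> row l i" using frob_d_char[OF y i1] id by simp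
  have il: "i \<le> length l" using id d_le_len[OF y] by linarith
  have ne1: "i \<noteq> 1" using ni il by (auto simp: addR_def)
  then have i2: "1 \<le> i - 1" "i - 1 < i" using i1 by linarith+
  have "\<not> row l i < row l (i - 1)" using ni il i1 ne1 by (auto simp: addR_def)
  moreover have "row l i \<le> row l (i - 1)" using young_anti[OF y i2(1)] by simp
  ultimately have eq: "row l (i - 1) = row l i" by linarith
  have "((frob_p l)(i := frob_p l i + 1)) (i - 1) = ((frob_p l)(i := frob_p l i + 1)) i"
    using i2 ir eq by (simp add: frob_p_def Suc_diff_le)
  then show ?thesis by (rule Mt_zero_row[OF i2 id])
qed

lemma zeroB:
  assumes y: "young l" and j: "j \<in> {1..frob_d l}"
    and nj: "j \<notin> (\<lambda>r. row l r + 1) ` {r \<in> addR l. frob_d l < r \<and> row l r + 1 \<le> frob_d l}"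
  shows "det (Mt m (frob_d l) (frob_p l) ((frob_q l)(j := frob_q l j + 1))) = 0"
proof -
  let ?d = "frob_d l"
  have j1: "1 \<le> j" and jd: "j \<le> ?d" using j by auto
  have d1: "1 \<le> ?d" using j1 jd by linarith
  define r where "r = col l j + 1"
  have "j \<le> row l ?d"
  proof -
    have "?d \<le> row l ?d" using frob_d_char[OF y d1] by simp
    then show ?thesis using jd by linarith
  qed
  then have dc: "?d \<le> col l j" using col_char[OF y d1 j1] by simp
  then have rd: "?d < r" by (simp add: r_def)
  have c1: "1 \<le> col l j" using dc d1 by linarith
  have rprev: "j \<le> row l (r - 1)" using col_char[OF y c1 j1] by (simp add: r_def)
  have rlt: "row l r < j"
  proof -
    have "\<not> r \<le> col l j" by (simp add: r_def)
    then show ?thesis using col_char[OF y _ j1, of r] by (simp add: r_def)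
  qed
  have "row l r + 1 \<noteq> j"
  proof
    assume h: "row l r + 1 = j"
    have "0 < row l (r - 1)" using rprev j1 by linarith
    then have "r - 1 \<le> length l" using row_pos by blast
    then have "r \<le> length l + 1" by linarith
    moreover have "r \<noteq> 1" "1 \<le> r" using c1 by (simp_all add: r_def)
    moreover have "row l r < row l (r - 1)" using rlt rprev by linarith
    ultimately have "r \<in> addR l" by (simp add: addR_def)
    then have "j \<in> (\<lambda>r. row l r + 1) ` {r \<in> addR l. ?d < r \<and> row l r + 1 \<le> ?d}"
      using h rd jd by force
    then show False using nj by simp
  qed
  then have rlt2: "row l r + 2 \<le> j" using rlt by linarith
  then have j2: "1 \<le> j - 1" "j - 1 < j" by linarith+
  have "col l (j - 1) = col l j"
  proof (rule nat_le_ext)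
    fix i :: nat assume i: "1 \<le> i"
    have "i \<le> col l (j - 1) \<longleftrightarrow> j - 1 \<le> row l i" by (rule col_char[OF y i j2(1)])
    also have "\<dots> \<longleftrightarrow> j \<le> row l i"
    proof
      assume h: "j - 1 \<le> row l i"
      show "j \<le> row l i"
      proof (rule ccontr)
        assume "\<not> j \<le> row l i"
        then have "\<not> i \<le> col l j" using col_char[OF y i j1] by simp
        then have "r \<le> i" by (simp add: r_def)
        then have "row l i \<le> row l r" using young_anti[OF y _ \<open>r \<le> i\<close>] c1 by (simp add: r_def)
        then show False using h rlt2 by linarith
      qed
    qed (use j2 in linarith)
    also have "\<dots> \<longleftrightarrow> i \<le> col l j" using col_char[OF y i j1] by simp
    finally show "i \<le> col l (j - 1) \<longleftrightarrow> i \<le> col l j" .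
  qed
  moreover have "j \<le> col l j" using dc jd by linarith
  ultimately have "((frob_q l)(j := frob_q l j + 1)) (j - 1) = ((frob_q l)(j := frob_q l j + 1)) j"
    using j2 by (simp add: frob_q_def Suc_diff_le)
  then show ?thesis by (rule Mt_zero_col[OF j2 jd])
qed

lemma zeroC:
  assumes y: "young l" and nc: "\<not> (frob_d l + 1 \<in> addR l \<and> row l (frob_d l + 1) = frob_d l)"
  shows "det (Mt m (frob_d l + 1) (frob_p l) (frob_q l)) = 0"
proof -
  let ?d = "frob_d l"
  have lt: "row l (?d + 1) < ?d + 1" using frob_d_char[OF y, of "?d + 1"] by simp
  show ?thesis
  proof (cases "row l (?d + 1) = ?d")
    case False
    then have lt2: "row l (?d + 1) < ?d" using lt by linarith
    then have d1: "1 \<le> ?d" by linarith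
    have "col l ?d = ?d"
    proof (rule nat_le_ext)
      fix i :: nat assume i: "1 \<le> i"
      have "i \<le> col l ?d \<longleftrightarrow> ?d \<le> row l i" by (rule col_char[OF y i d1])
      also have "\<dots> \<longleftrightarrow> i \<le> ?d"
      proof
        assume h: "?d \<le> row l i"
        show "i \<le> ?d"
        proof (rule ccontr)
          assume "\<not> i \<le> ?d"
          then have "row l i \<le> row l (?d + 1)" using young_anti[OF y, of "?d+1" i] by simp
          then show False using h lt2 by linarith
        qed
      next
        assume h: "i \<le> ?d"
        have "row l ?d \<le> row l i" using young_anti[OF y i h] .
        moreover have "?d \<le> row l ?d" using frob_d_char[OF y d1] by simp
        ultimately show "?d \<le> row l i" by linarith
      qed
      finally show "i \<le> col l ?d \<longleftrightarrow> i \<le> ?d" .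
    qed
    then have qq: "frob_q l ?d = frob_q l (?d + 1)" using q_last[OF y] by (simp add: frob_q_def)
    show ?thesis by (rule Mt_zero_col[OF d1 _ _ qq]) simp_all
  next
    case True
    have "?d + 1 \<le> length l + 1" using d_le_len[OF y] by linarith
    then have "?d + 1 \<noteq> 1 \<and> \<not> row l (?d + 1) < row l ?d" using nc True by (auto simp: addR_def)
    then have d1: "1 \<le> ?d" and nlt: "\<not> row l (?d + 1) < row l ?d" by auto
    have "row l (?d + 1) \<le> row l ?d" using young_anti[OF y d1] by simp
    then have "row l ?d = ?d" using nlt True by linarith
    then have pp: "frob_p l ?d = frob_p l (?d + 1)" using p_last[OF y] by (simp add: frob_p_def)
    show ?thesis by (rule Mt_zero_row[OF d1 _ _ pp]) simp_all
  qed
qed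



lemma sum_decomp:
  assumes y: "young l"
  shows "(\<Sum>r\<in>addR l. det (Mt m (frob_d (add_row l r)) (frob_p (add_row l r)) (frob_q (add_row l r))))
   = (\<Sum>i\<in>{1..frob_d l}. det (Mt m (frob_d l) ((frob_p l)(i := frob_p l i + 1)) (frob_q l)))
   + (\<Sum>j\<in>{1..frob_d l}. det (Mt m (frob_d l) (frob_p l) ((frob_q l)(j := frob_q l j + 1))))
   + det (Mt m (frob_d l + 1) (frob_p l) (frob_q l))"
proof -
  let ?d = "frob_d l" and ?p = "frob_p l" and ?q = "frob_q l"
  define D where "D r = det (Mt m (frob_d (add_row l r)) (frob_p (add_row l r)) (frob_q (add_row l r)))" for r
  define X where "X i = det (Mt m ?d (?p(i := ?p i + 1)) ?q)" for i
  define Y where "Y j = det (Mt m ?d ?p (?q(j := ?q j + 1)))" for j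
  define Z where "Z = det (Mt m (?d + 1) ?p ?q)"
  define RA where "RA = {r \<in> addR l. r \<le> ?d}"
  define RB where "RB = {r \<in> addR l. ?d < r \<and> row l r + 1 \<le> ?d}"
  define RC where "RC = {r \<in> addR l. ?d < r \<and> \<not> row l r + 1 \<le> ?d}"
  have fin: "finite RA" "finite RB" "finite RC"
    using finite_addR[of l] by (auto simp: RA_def RB_def RC_def)
  have split: "addR l = RA \<union> RB \<union> RC" by (auto simp: RA_def RB_def RC_def)
  have "sum D (addR l) = sum D RA + sum D RB + sum D RC"
    unfolding split
    by (subst sum.union_disjoint; (use fin in simp)?; (auto simp: RA_def RB_def RC_def)?)
       (subst sum.union_disjoint; (use fin in simp)?; (auto simp: RA_def RB_def RC_def)?)
  moreover have hA: "sum D RA = (\<Sum>i\<in>{1..?d}. X i)"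
  proof -
    have "sum D RA = sum X RA"
      by (rule sum.cong[OF refl]) (use det_add_row[OF y] in \<open>auto simp: RA_def D_def X_def\<close>)
    also have "\<dots> = (\<Sum>i\<in>{1..?d}. X i)"
    proof (rule sum.mono_neutral_left)
      show "RA \<subseteq> {1..?d}" by (auto simp: RA_def addR_def)
      show "\<forall>i\<in>{1..?d} - RA. X i = 0"
      proof
        fix i assume "i \<in> {1..?d} - RA"
        then have "i \<in> {1..?d}" "i \<notin> addR l" by (auto simp: RA_def)
        then show "X i = 0" unfolding X_def by (rule zeroA[OF y])
      qed
    qed simp
    finally show ?thesis .
  qed
  moreover have hB: "sum D RB = (\<Sum>j\<in>{1..?d}. Y j)"
  proof -
    let ?g = "\<lambda>r. row l r + 1"
    have "sum D RB = sum (Y \<circ> ?g) RB"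
      by (rule sum.cong[OF refl]) (use det_add_row[OF y] in \<open>auto simp: RB_def D_def Y_def\<close>)
    also have "inj_on ?g RB"
    proof
      fix r s assume r: "r \<in> RB" and s: "s \<in> RB" and e: "?g r = ?g s"
      show "r = s"
      proof (rule ccontr)
        assume "r \<noteq> s"
        then consider "r < s" | "s < r" by linarith
        then show False
        proof cases
          case 1
          have "s \<noteq> 1" "row l s < row l (s - 1)" using 1 s by (auto simp: RB_def addR_def)
          moreover have "row l (s - 1) \<le> row l r" using young_anti[OF y, of r "s-1"] 1 r
            by (auto simp: RB_def addR_def)
          ultimately show False using e by simp
        next
          case 2
          have "r \<noteq> 1" "row l r < row l (r - 1)" using 2 r by (auto simp: RB_def addR_def)
          moreover have "row l (r - 1) \<le> row l s" using young_anti[OF y, of s "r-1"] 2 s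
            by (auto simp: RB_def addR_def)
          ultimately show False using e by simp
        qed
      qed
    qed
    then have "sum (Y \<circ> ?g) RB = sum Y (?g ` RB)" by (rule sum.reindex[symmetric])
    also have "\<dots> = (\<Sum>j\<in>{1..?d}. Y j)"
    proof (rule sum.mono_neutral_left)
      show "?g ` RB \<subseteq> {1..?d}" by (auto simp: RB_def)
      show "\<forall>j\<in>{1..?d} - ?g ` RB. Y j = 0"
      proof
        fix j assume "j \<in> {1..?d} - ?g ` RB"
        then have "j \<in> {1..?d}" "j \<notin> ?g ` {r \<in> addR l. ?d < r \<and> row l r + 1 \<le> ?d}"
          by (auto simp: RB_def)
        then show "Y j = 0" unfolding Y_def by (rule zeroB[OF y])
      qed
    qed simp
    finally show ?thesis .
  qed
  moreover have hC: "sum D RC = Z"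
  proof (cases "?d + 1 \<in> addR l \<and> row l (?d + 1) = ?d")
    case True
    have "RC = {?d + 1}"
    proof
      show "RC \<subseteq> {?d + 1}"
      proof
        fix r assume "r \<in> RC"
        then have "r \<in> addR l" "?d < r" "?d < row l r + 1" by (auto simp: RC_def)
        then show "r \<in> {?d + 1}" using case_imp[OF y] by auto
      qed
      show "{?d + 1} \<subseteq> RC" using True by (auto simp: RC_def)
    qed
    then have "sum D RC = D (?d + 1)" by simp
    also have "\<dots> = Z" using det_add_row[OF y, of "?d + 1" m] True by (simp add: D_def Z_def)
    finally show ?thesis .
  next
    case False
    have "RC = {}"
    proof -
      { fix r assume "r \<in> RC"
        then have "r \<in> addR l" "?d < r" "?d < row l r + 1" by (auto simp: RC_def)
        then have "r = ?d + 1 \<and> row l r = ?d" using case_imp[OF y] by auto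
        then have False using False \<open>r \<in> addR l\<close> by auto }
      then show ?thesis by blast
    qed
    then show ?thesis using zeroC[OF y False] by (simp add: Z_def)
  qed
  ultimately show ?thesis by (simp add: D_def X_def Y_def Z_def)
qed



lemma phi_Mt: "phi m t k = det (Mt m (frob_d k) (frob_p k) (frob_q k)) / pochhammer t (nboxes k)"
  by (simp add: phi_def Mt_def)

theorem theorem8p1:
  fixes t :: complex and m :: "nat \<Rightarrow> nat \<Rightarrow> complex" and l :: "nat list"
  assumes t: "\<forall>k::nat. t \<noteq> - of_nat k"
    and rec: "\<forall>p q. m (p + 1) q + m p (q + 1) - of_nat (p + q + 1) * m p q = m p 0 * m 0 q"
    and m00: "m 0 0 = t"
    and yl: "young l"
  shows "phi m t l = (\<Sum>\<nu>\<in>{\<nu>. adds_box l \<nu>}. phi m t \<nu>)"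
proof -
  let ?d = "frob_d l" and ?p = "frob_p l" and ?q = "frob_q l" and ?n = "nboxes l"
  have nb: "\<And>r. r \<in> addR l \<Longrightarrow> nboxes (add_row l r) = ?n + 1"
    using adds_box_add_row[OF yl] by (simp add: adds_box_def)
  have "(\<Sum>\<nu>\<in>{\<nu>. adds_box l \<nu>}. phi m t \<nu>) = (\<Sum>r\<in>addR l. phi m t (add_row l r))"
    unfolding adds_box_set(1)[OF yl] by (rule sum.reindex[OF adds_box_set(2)[OF yl], unfolded comp_def])
  also have "\<dots> = (\<Sum>r\<in>addR l. det (Mt m (frob_d (add_row l r)) (frob_p (add_row l r)) (frob_q (add_row l r))))
        / pochhammer t (?n + 1)"
    unfolding sum_divide_distrib by (rule sum.cong[OF refl]) (simp add: phi_Mt nb)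
  also have "(\<Sum>r\<in>addR l. det (Mt m (frob_d (add_row l r)) (frob_p (add_row l r)) (frob_q (add_row l r))))
        = (of_nat (Sf l) + t) * det (Mt m ?d ?p ?q)"
  proof -
    have P0: "?p (Suc ?d) = 0" using p_last[OF yl] by simp
    have Q0: "?q (Suc ?d) = 0" using q_last[OF yl] by simp
    show ?thesis
      unfolding sum_decomp[OF yl] Sf_def using main_alg[where P = ?p and Q = ?q and d = ?d, OF rec m00 P0 Q0] by simp
  qed
  also have "Sf l = ?n" using nboxes_Sf[OF yl] by simp
  also have "pochhammer t (?n + 1) = (t + of_nat ?n) * pochhammer t ?n"
    by (simp add: pochhammer_rec')
  finally have "(\<Sum>\<nu>\<in>{\<nu>. adds_box l \<nu>}. phi m t \<nu>)
      = (of_nat ?n + t) * det (Mt m ?d ?p ?q) / ((t + of_nat ?n) * pochhammer t ?n)" .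
  also have "\<dots> = det (Mt m ?d ?p ?q) / pochhammer t ?n"
  proof -
    have "t + of_nat ?n \<noteq> 0" using t by (metis add.commute add_eq_0_iff)
    then show ?thesis by (simp add: add.commute)
  qed
  also have "\<dots> = phi m t l" by (simp add: phi_Mt)
  finally show ?thesis ..
qed


end
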